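(* Let $N,k,R$ be positive integers with $N>4kR$, and consider the open chain with sites $1,\dots,N$ and distance $|i-j|$. Let $H$ be an operator (not necessarily Hermitian) on $(\mathbb{C}^2)^{\otimes N}$ that is $k$-local and has range at most $R$. If $H|W^p\rangle=E_p|W^p\rangle$ with $E_p\in\mathbb{C}$ for every $p\in\{0,1,\dots,N\}$, then there exist constants $\Omega,\omega\in\mathbb{C}$ such that $E_p=\Omega+\omega p$ for all $p\in\{0,1,\dots,N\}$ (with $\Omega,\omega\in\mathbb{R}$ if $H$ is Hermitian).
   Context: System of $N$ qubits on sites $1,\dots,N$ with local basis $|0\rangle,|1\rangle$. For each site $i$, $s_i^\dagger$ acts on site $i$ as $s^\dagger|0\rangle=|1\rangle$, $s^\dagger|1\rangle=0$, and $s_i=(s_i^\dagger)^\dagger$ (so $s|1\rangle=|0\rangle$, $s|0\rangle=0$); $n_i=s_i^\dagger s_i$. $|\overline 0\rangle=|0\rangle^{\otimes N}$. Every operator has a unique expansion as a linear combination of normal-ordered strings $s^\dagger_{j_1}\cdots s^\dagger_{j_n}s_{k_1}\cdots s_{k_m}$ (the $j$'s pairwise distinct, the $k$'s pairwise distinct, overlaps between the two sets allowed; the empty string is $I$); the sites of such a string are $\{j_1,\dots,j_n,k_1,\dots,k_m\}$. A string has range $R$, where $R$ is the smallest positive integer such that all pairwise distances between its sites are $<R$. An operator has range at most $R$ if every string with nonzero coefficient in its expansion has range at most $R$; it is $k$-local if every such string involves at most $k$ distinct sites. Dicke states: $S^\dagger=\sum_{i=1}^N s_i^\dagger$ and, for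 $p=0,\dots,N$, $|W^p\rangle=(S^\dagger)^p|\overline 0\rangle/\|(S^\dagger)^p|\overline 0\rangle\|$, i.e. the normalized equal-weight superposition of all basis states with exactly $p$ sites in state $|1\rangle$. *)

theory Defs
  imports Complex_Main
begin

text \<open>Basis states of N qubits on sites 1..N are identified with the set of sites
in state |1>, i.e. subsets of {1..N}.  An operator is given by the coefficients
c J K of its (unique) normal-ordered expansion
  H = sum over J,K of c J K * s^dagger_J s_K,
where J is the set of created sites and K the set of annihilated sites.\<close>

definition sites :: "nat \<Rightarrow> nat set" where
  "sites N = {1..N}"

definition coeffs_on :: "nat \<Rightarrow> (nat set \<Rightarrow> nat set \<Rightarrow> complex) \<Rightarrow> bool" where
  "coeffs_on N c \<longleftrightarrow> (\<forall>J K. c J K \<noteq> 0 \<longrightarrow> J \<subseteq> sites N \<and> K \<subseteq> sites N)"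

definition string_elem :: "nat set \<Rightarrow> nat set \<Rightarrow> nat set \<Rightarrow> nat set \<Rightarrow> complex" where
  "string_elem J K y x =
     (if K \<subseteq> x \<and> J \<inter> (x - K) = {} \<and> y = (x - K) \<union> J then 1 else 0)"

definition op_mat :: "nat \<Rightarrow> (nat set \<Rightarrow> nat set \<Rightarrow> complex) \<Rightarrow> nat set \<Rightarrow> nat set \<Rightarrow> complex" where
  "op_mat N c y x = (\<Sum>(J,K)\<in>Pow (sites N) \<times> Pow (sites N). c J K * string_elem J K y x)"

definition op_apply :: "nat \<Rightarrow> (nat set \<Rightarrow> nat set \<Rightarrow> complex) \<Rightarrow> (nat set \<Rightarrow> complex) \<Rightarrow> nat set \<Rightarrow> complex" where
  "op_apply N c v y = (\<Sum>x\<in>Pow (sites N). op_mat N c y x * v x)"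

definition k_local :: "nat \<Rightarrow> (nat set \<Rightarrow> nat set \<Rightarrow> complex) \<Rightarrow> bool" where
  "k_local k c \<longleftrightarrow> (\<forall>J K. c J K \<noteq> 0 \<longrightarrow> card (J \<union> K) \<le> k)"

definition range_le :: "nat \<Rightarrow> (nat set \<Rightarrow> nat set \<Rightarrow> complex) \<Rightarrow> bool" where
  "range_le R c \<longleftrightarrow> (\<forall>J K. c J K \<noteq> 0 \<longrightarrow>
      (\<forall>i\<in>J \<union> K. \<forall>j\<in>J \<union> K. \<bar>int i - int j\<bar> < int R))"

definition hermitian_op :: "nat \<Rightarrow> (nat set \<Rightarrow> nat set \<Rightarrow> complex) \<Rightarrow> bool" where
  "hermitian_op N c \<longleftrightarrow> (\<forall>x\<in>Pow (sites N). \<forall>y\<in>Pow (sites N). op_mat N c y x = cnj (op_mat N c x y))"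

definition dicke :: "nat \<Rightarrow> nat \<Rightarrow> nat set \<Rightarrow> complex" where
  "dicke N p x = (if x \<subseteq> sites N \<and> card x = p then complex_of_real (1 / sqrt (real (N choose p))) else 0)"

end

theory Submission
  imports Defs
begin

definition tt :: "nat set \<Rightarrow> nat set \<Rightarrow> nat set \<Rightarrow> nat set \<Rightarrow> complex" where
  "tt S J K y = (\<Sum>x\<in>{x\<in>Pow S. card x = card y}. string_elem J K y x)"

lemma se_zero1: "a \<notin> J \<union> K \<Longrightarrow> a \<in> x \<Longrightarrow> a \<notin> y \<Longrightarrow> string_elem J K y x = 0"
  unfolding string_elem_def by auto

lemma se_zero2: "a \<notin> J \<union> K \<Longrightarrow> a \<notin> x \<Longrightarrow> a \<in> y \<Longrightarrow> string_elem J K y x = 0"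
  unfolding string_elem_def by auto

lemma se_ins: "a \<notin> J \<union> K \<Longrightarrow> a \<notin> x \<Longrightarrow> a \<notin> y \<Longrightarrow>
   string_elem J K (insert a y) (insert a x) = string_elem J K y x"
  unfolding string_elem_def
proof -
  assume h: "a \<notin> J \<union> K" "a \<notin> x" "a \<notin> y"
  have 1: "(K \<subseteq> insert a x) = (K \<subseteq> x)" using h by auto
  have 2: "(J \<inter> (insert a x - K) = {}) = (J \<inter> (x - K) = {})" using h by auto
  have 3: "(insert a y = (insert a x - K) \<union> J) = (y = (x - K) \<union> J)"
  proof
    assume "insert a y = (insert a x - K) \<union> J"
    then have "insert a y - {a} = ((insert a x - K) \<union> J) - {a}" by simp
    then show "y = (x - K) \<union> J" using h by auto
  qed (use h in auto)
  show "(if K \<subseteq> insert a x \<and> J \<inter> (insert a x - K) = {} \<and> insert a y = insert a x - K \<union> J then 1 else 0) =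
    (if K \<subseteq> x \<and> J \<inter> (x - K) = {} \<and> y = x - K \<union> J then 1 else (0::complex))"
    using 1 2 3 by simp
qed

lemma tt_alt:
  assumes "finite S" "a \<notin> J \<union> K" "a \<notin> y"
  shows "tt S J K y = (\<Sum>x\<in>{x\<in>Pow (S - {a}). card x = card y}. string_elem J K y x)"
  unfolding tt_def
proof (rule sum.mono_neutral_right)
  show "finite {x \<in> Pow S. card x = card y}" using assms by simp
  show "{x \<in> Pow (S - {a}). card x = card y} \<subseteq> {x \<in> Pow S. card x = card y}" by auto
  show "\<forall>i\<in>{x \<in> Pow S. card x = card y} - {x \<in> Pow (S - {a}). card x = card y}. string_elem J K y i = 0"
  proof
    fix i assume i: "i \<in> {x \<in> Pow S. card x = card y} - {x \<in> Pow (S - {a}). card x = card y}"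
    then have "a \<in> i" by auto
    then show "string_elem J K y i = 0" using se_zero1[of a J K i y] assms by blast
  qed
qed

lemma tt_insert:
  assumes "finite S" "a \<in> S" "a \<notin> J \<union> K" "a \<notin> y" "finite y"
  shows "tt S J K (insert a y) = tt S J K y"
proof -
  let ?A = "{x\<in>Pow (S - {a}). card x = card y}"
  have c: "card (insert a y) = card y + 1" using assms by simp
  have "tt S J K (insert a y) = (\<Sum>x\<in>insert a ` ?A. string_elem J K (insert a y) x)"
    unfolding tt_def c
  proof (rule sum.mono_neutral_right)
    show "finite {x \<in> Pow S. card x = card y + 1}" using assms by simp
    show "insert a ` ?A \<subseteq> {x \<in> Pow S. card x = card y + 1}"
    proof
      fix z assume "z \<in> insert a ` ?A"
      then obtain x where x: "x \<in> ?A" "z = insert a x" by blast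
      have xS: "x \<subseteq> S - {a}" and xc: "card x = card y" using x(1) by auto
      have "finite x" using xS assms(1) finite_subset by blast
      have ax: "a \<notin> x" using xS by blast
      have "card z = card y + 1" using x(2) xc ax \<open>finite x\<close> by simp
      moreover have "z \<subseteq> S" using x(2) xS assms(2) by blast
      ultimately show "z \<in> {x \<in> Pow S. card x = card y + 1}" by simp
    qed
    show "\<forall>i\<in>{x \<in> Pow S. card x = card y + 1} - insert a ` ?A. string_elem J K (insert a y) i = 0"
    proof
      fix z assume z: "z \<in> {x \<in> Pow S. card x = card y + 1} - insert a ` ?A"
      show "string_elem J K (insert a y) z = 0"
      proof (cases "a \<in> z")
        case True
        have zS: "z \<subseteq> S" and zc: "card z = card y + 1" using z by blast+
        have "finite z" using zS assms(1) finite_subset by blast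
        have "card (z - {a}) = card y" using zc True \<open>finite z\<close> by simp
        moreover have "z - {a} \<subseteq> S - {a}" using zS by blast
        ultimately have "z - {a} \<in> ?A" by simp
        moreover have "z = insert a (z - {a})" using True by auto
        ultimately show ?thesis using z by blast
      next
        case False
        then show ?thesis using se_zero2[of a J K z "insert a y"] assms(3) by blast
      qed
    qed
  qed
  also have "\<dots> = (\<Sum>x\<in>?A. string_elem J K (insert a y) (insert a x))"
  proof (rule sum.reindex_cong[where l="insert a"])
    show "inj_on (insert a) ?A" unfolding inj_on_def by blast
  qed simp_all
  also have "\<dots> = (\<Sum>x\<in>?A. string_elem J K y x)"
  proof (rule sum.cong)
    fix x assume "x \<in> ?A"
    then have "a \<notin> x" by blast
    then show "string_elem J K (insert a y) (insert a x) = string_elem J K y x"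
      using se_ins[of a J K x y] assms by blast
  qed simp
  also have "\<dots> = tt S J K y" using tt_alt assms by simp
  finally show ?thesis .
qed


lemma affine_from_second:
  fixes E :: "nat \<Rightarrow> complex"
  assumes "\<And>p. p + 2 \<le> N \<Longrightarrow> E (p + 2) = 2 * E (p + 1) - E p"
  shows "p \<le> N \<Longrightarrow> E p = E 0 + (E 1 - E 0) * of_nat p"
proof (induction p rule: less_induct)
  case (less p)
  show ?case
  proof (cases p)
    case 0 then show ?thesis by simp
  next
    case (Suc q)
    show ?thesis
    proof (cases q)
      case 0 then show ?thesis using Suc by simp
    next
      case (Suc r)
      have pr: "p = r + 2" using Suc \<open>p = Suc q\<close> by simp
      have "E p = 2 * E (r + 1) - E r" using assms[of r] pr less.prems by simp
      also have "\<dots> = 2 * (E 0 + (E 1 - E 0) * of_nat (r+1)) - (E 0 + (E 1 - E 0) * of_nat r)"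
        using less.IH[of r] less.IH[of "r+1"] pr less.prems by simp
      also have "\<dots> = E 0 + (E 1 - E 0) * of_nat p" unfolding pr by (simp add: algebra_simps)
      finally show ?thesis .
    qed
  qed
qed

theorem theorem1:
  fixes N k R :: nat and c :: "nat set \<Rightarrow> nat set \<Rightarrow> complex" and E :: "nat \<Rightarrow> complex"
  assumes "k > 0" and "R > 0" and "N > 4 * k * R"
    and "coeffs_on N c" and "k_local k c" and "range_le R c"
    and "\<forall>p\<le>N. \<forall>y\<in>Pow (sites N). op_apply N c (dicke N p) y = E p * dicke N p y"
  shows "\<exists>\<Omega> \<omega>. (\<forall>p\<le>N. E p = \<Omega> + \<omega> * of_nat p)
            \<and> (hermitian_op N c \<longrightarrow> \<Omega> \<in> \<real> \<and> \<omega> \<in> \<real>)"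
proof -
  define S where "S = sites N"
  have finS: "finite S" unfolding S_def sites_def by simp
  define F where "F y = (\<Sum>x\<in>{x\<in>Pow S. card x = card y}. op_mat N c y x)" for y
  have EF: "E (card y) = F y" if y: "y \<subseteq> S" "card y \<le> N" for y
  proof -
    define p where "p = card y"
    define d where "d = complex_of_real (1 / sqrt (real (N choose p)))"
    have "(N choose p) > 0" using y p_def by simp
    then have d0: "d \<noteq> 0" unfolding d_def by simp
    have "op_apply N c (dicke N p) y = (\<Sum>x\<in>Pow S. if card x = p then op_mat N c y x * d else 0)"
      unfolding op_apply_def S_def
    proof (rule sum.cong)
      fix x assume "x \<in> Pow (sites N)"
      then show "op_mat N c y x * dicke N p x = (if card x = p then op_mat N c y x * d else 0)"
        unfolding dicke_def d_def by simp
    qed simp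
    also have "\<dots> = (\<Sum>x\<in>{x\<in>Pow S. card x = p}. op_mat N c y x * d)"
      using sum.inter_filter[of "Pow S" "\<lambda>x. op_mat N c y x * d" "\<lambda>x. card x = p"] finS by simp
    also have "\<dots> = F y * d" unfolding F_def p_def by (simp add: sum_distrib_right)
    finally have "op_apply N c (dicke N p) y = F y * d" .
    moreover have "op_apply N c (dicke N p) y = E p * dicke N p y"
      using assms(7) y unfolding p_def S_def by blast
    moreover have "dicke N p y = d" using y unfolding dicke_def d_def p_def S_def by simp
    ultimately show ?thesis using d0 p_def by simp
  qed
  have Fdec: "F y = (\<Sum>(J,K)\<in>Pow S \<times> Pow S. c J K * tt S J K y)" for y
  proof -
    have "F y = (\<Sum>x\<in>{x\<in>Pow S. card x = card y}. \<Sum>JK\<in>Pow S \<times> Pow S. c (fst JK) (snd JK) * string_elem (fst JK) (snd JK) y x)"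
      unfolding F_def op_mat_def S_def by (simp add: case_prod_beta)
    also have "\<dots> = (\<Sum>JK\<in>Pow S \<times> Pow S. \<Sum>x\<in>{x\<in>Pow S. card x = card y}. c (fst JK) (snd JK) * string_elem (fst JK) (snd JK) y x)"
      by (rule sum.swap)
    also have "\<dots> = (\<Sum>JK\<in>Pow S \<times> Pow S. c (fst JK) (snd JK) * tt S (fst JK) (snd JK) y)"
      unfolding tt_def by (simp add: sum_distrib_left)
    finally show ?thesis by (simp add: case_prod_beta)
  qed
  have second: "F (insert a (insert b y)) - F (insert a y) - F (insert b y) + F y = 0"
    if y: "y \<subseteq> S" and ab: "a \<in> S" "b \<in> S" "a \<notin> y" "b \<notin> y" "a \<noteq> b" "\<bar>int a - int b\<bar> \<ge> int R" for y a b
  proof -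
    have fy: "finite y" using y finS finite_subset by blast
    have term0: "c J K * tt S J K (insert a (insert b y)) - c J K * tt S J K (insert a y)
        - c J K * tt S J K (insert b y) + c J K * tt S J K y = 0" for J K
    proof (cases "c J K = 0")
      case True then show ?thesis by simp
    next
      case False
      have rl: "\<forall>i\<in>J \<union> K. \<forall>j\<in>J \<union> K. \<bar>int i - int j\<bar> < int R"
        using assms(6) False unfolding range_le_def by blast
      have "a \<notin> J \<union> K \<or> b \<notin> J \<union> K"
      proof (rule ccontr)
        assume "\<not> (a \<notin> J \<union> K \<or> b \<notin> J \<union> K)"
        then have "a \<in> J \<union> K" "b \<in> J \<union> K" by blast+
        then have "\<bar>int a - int b\<bar> < int R" using rl by blast
        then show False using ab(6) by linarith
      qed
      then show ?thesis
      proof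
        assume a: "a \<notin> J \<union> K"
        have "tt S J K (insert a (insert b y)) = tt S J K (insert b y)"
          by (rule tt_insert) (use finS ab a fy in auto)
        moreover have "tt S J K (insert a y) = tt S J K y"
          by (rule tt_insert) (use finS ab a fy in auto)
        ultimately show ?thesis by simp
      next
        assume b: "b \<notin> J \<union> K"
        have "tt S J K (insert b (insert a y)) = tt S J K (insert a y)"
          by (rule tt_insert) (use finS ab b fy in auto)
        moreover have "tt S J K (insert b y) = tt S J K y"
          by (rule tt_insert) (use finS ab b fy in auto)
        moreover have "insert a (insert b y) = insert b (insert a y)" by blast
        ultimately show ?thesis by simp
      qed
    qed
    have "F (insert a (insert b y)) - F (insert a y) - F (insert b y) + F y
      = (\<Sum>(J,K)\<in>Pow S \<times> Pow S. c J K * tt S J K (insert a (insert b y)) - c J K * tt S J K (insert a y)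
        - c J K * tt S J K (insert b y) + c J K * tt S J K y)"
      unfolding Fdec by (simp add: case_prod_beta sum.distrib sum_subtractf)
    also have "\<dots> = 0" using term0 by simp
    finally show ?thesis .
  qed
  have "k * R \<ge> R" using assms(1) by simp
  then have N1: "N \<ge> R + 1" using assms(3) by linarith
  have rec: "E (p + 2) = 2 * E (p + 1) - E p" if p: "p + 2 \<le> N" for p
  proof -
    define y where "y = {2..p+1}"
    have cy: "card y = p" unfolding y_def by simp
    have yS: "y \<subseteq> S" unfolding y_def S_def sites_def using p by auto
    have ab: "1 \<in> S" "N \<in> S" "1 \<notin> y" "N \<notin> y" "1 \<noteq> N" "\<bar>int 1 - int N\<bar> \<ge> int R"
      unfolding S_def sites_def y_def using p N1 by auto
    have fy: "finite y" unfolding y_def by simp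
    have c1: "card (insert 1 y) = p + 1" using ab fy cy by simp
    have c2: "card (insert N y) = p + 1" using ab fy cy by simp
    have c3: "card (insert 1 (insert N y)) = p + 2" using ab fy cy by simp
    have "E (p+2) = F (insert 1 (insert N y))" using EF[of "insert 1 (insert N y)"] c3 yS ab p by simp
    moreover have "E (p+1) = F (insert 1 y)" using EF[of "insert 1 y"] c1 yS ab p by simp
    moreover have "E (p+1) = F (insert N y)" using EF[of "insert N y"] c2 yS ab p by simp
    moreover have "E p = F y" using EF[of y] cy yS p by simp
    ultimately show ?thesis using second[OF yS ab] by (simp add: algebra_simps)
  qed
  have aff: "\<forall>p\<le>N. E p = E 0 + (E 1 - E 0) * of_nat p"
    using affine_from_second[of N E, OF rec] by blast
  have herm: "E p \<in> \<real>" if h: "hermitian_op N c" and p: "p \<le> N" for p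
  proof -
    define Y where "Y = {y\<in>Pow S. card y = p}"
    have finY: "finite Y" unfolding Y_def using finS by simp
    have cY: "card Y = N choose p"
    proof -
      have "Y = {B. B \<subseteq> S \<and> card B = p}" unfolding Y_def by auto
      moreover have "card S = N" unfolding S_def sites_def by simp
      ultimately show ?thesis using n_subsets[OF finS] by simp
    qed
    have "(\<Sum>y\<in>Y. F y) = (\<Sum>y\<in>Y. E p)"
    proof (rule sum.cong)
      fix y assume "y \<in> Y"
      then have "y \<subseteq> S" "card y = p" unfolding Y_def by blast+
      then show "F y = E p" using EF[of y] p by simp
    qed simp
    then have sE: "(\<Sum>y\<in>Y. F y) = of_nat (N choose p) * E p" using cY by simp
    have sF: "(\<Sum>y\<in>Y. F y) = (\<Sum>y\<in>Y. \<Sum>x\<in>Y. op_mat N c y x)"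
    proof (rule sum.cong)
      fix y assume "y \<in> Y"
      then have "card y = p" unfolding Y_def by blast
      then show "F y = (\<Sum>x\<in>Y. op_mat N c y x)" unfolding F_def Y_def by simp
    qed simp
    have "cnj (\<Sum>y\<in>Y. \<Sum>x\<in>Y. op_mat N c y x) = (\<Sum>y\<in>Y. \<Sum>x\<in>Y. cnj (op_mat N c y x))"
      by (simp add: cnj_sum)
    also have "\<dots> = (\<Sum>y\<in>Y. \<Sum>x\<in>Y. op_mat N c x y)"
    proof (intro sum.cong refl)
      fix y x assume "y \<in> Y" "x \<in> Y"
      then have "y \<in> Pow (sites N)" "x \<in> Pow (sites N)" unfolding Y_def S_def by blast+
      then have "op_mat N c x y = cnj (op_mat N c y x)" using h unfolding hermitian_op_def by blast
      then show "cnj (op_mat N c y x) = op_mat N c x y" by simp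
    qed
    also have "\<dots> = (\<Sum>y\<in>Y. \<Sum>x\<in>Y. op_mat N c y x)" by (rule sum.swap)
    finally have X: "cnj (\<Sum>y\<in>Y. \<Sum>x\<in>Y. op_mat N c y x) = (\<Sum>y\<in>Y. \<Sum>x\<in>Y. op_mat N c y x)" .
    have Z: "(\<Sum>y\<in>Y. \<Sum>x\<in>Y. op_mat N c y x) = of_nat (N choose p) * E p" using sE sF by simp
    have "cnj (of_nat (N choose p) * E p) = of_nat (N choose p) * E p"
      using X unfolding Z .
    then have "of_nat (N choose p) * cnj (E p) = of_nat (N choose p) * E p" by simp
    moreover have "(of_nat (N choose p) :: complex) \<noteq> 0" using p by simp
    ultimately have "cnj (E p) = E p" by simp
    then show ?thesis using Reals_cnj_iff by blast
  qed
  show ?thesis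
  proof (intro exI conjI impI)
    show "\<forall>p\<le>N. E p = E 0 + (E 1 - E 0) * of_nat p" by (rule aff)
  next
    assume h: "hermitian_op N c"
    show "E 0 \<in> \<real>" using herm[OF h] by simp
    have "E 1 \<in> \<real>" using herm[OF h, of 1] N1 by simp
    then show "E 1 - E 0 \<in> \<real>" using herm[OF h, of 0] by (simp add: Reals_diff)
  qed
qed

end
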